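(* Consider the setting in the context, with $0<\alpha\le 8$ and $T\ge\max\{40/\alpha+1,40\}K$. For every arm $i\in B$ and every real $\varkappa$, \[ \Pr(\mathcal{M}_{i,\varkappa})\ge 1-\frac{4\cdot2^{1/(8\alpha)}}{2^{1/(8\alpha)}-1}\exp\Big(-\frac{\lambda_i\Delta_i^2}{10}+\frac{\varkappa}{4}\Big). \]
   Context: Arm $i\in[K]$ has reward distribution $\mathcal{D}_i$ on $[0,1]$ with mean $\theta_i$; $\theta\in(0,1)$; $\Delta_i=|\theta_i-\theta|$ (convention $\ln(1/0)=+\infty$). For each $i$, $X_{i,1},X_{i,2},\dots$ are i.i.d. from $\mathcal{D}_i$; $\hat\Delta_{i,t}=|\frac1t\sum_{s\le t}X_{i,s}-\theta|$. $M=\max\{40/\alpha+1,40\}$; $g_i(x)=e^{2x}$ if $x\le\ln\Delta_i^{-1}$, $g_i(x)=\frac{x-\ln\Delta_i^{-1}+\alpha}{\alpha\Delta_i^2}$ otherwise; $\Lambda$ is the unique $x\ge0$ with $\sum_{i=1}^Kg_i(x)=T/M$; $\lambda_i=g_i(\Lambda)$; $B=\{i:\ln\Delta_i^{-1}<\Lambda\}$. The event $\mathcal{M}_{i,\varkappa}$ is: for all integers $t$ with $1\le t\le\lambda_i$, $|\hat\Delta_{i,t}-\Delta_i|\le\sqrt{\big(\lambda_i\Delta_i^2/5-\varkappa/2+\frac{1}{4\alpha}\ln\frac{\lambda_i}{t}\big)/t}$. *)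

theory Defs
  imports "HOL-Probability.Probability"
begin

definition arm_mean :: "(nat \<Rightarrow> real measure) \<Rightarrow> nat \<Rightarrow> real" where
  "arm_mean D i = (\<integral>x. x \<partial>(D i))"

definition gap :: "(nat \<Rightarrow> real measure) \<Rightarrow> real \<Rightarrow> nat \<Rightarrow> real" where
  "gap D \<theta> i = \<bar>arm_mean D i - \<theta>\<bar>"

definition Mconst :: "real \<Rightarrow> real" where
  "Mconst \<alpha> = max (40 / \<alpha> + 1) 40"

text \<open>g_i(x); with the convention ln(1/0) = +infinity, gap 0 means the first branch always.\<close>
definition gfun :: "real \<Rightarrow> (nat \<Rightarrow> real measure) \<Rightarrow> real \<Rightarrow> nat \<Rightarrow> real \<Rightarrow> real" where
  "gfun \<alpha> D \<theta> i x =
     (if gap D \<theta> i = 0 \<or> x \<le> ln (1 / gap D \<theta> i) then exp (2 * x)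
      else (x - ln (1 / gap D \<theta> i) + \<alpha>) / (\<alpha> * (gap D \<theta> i)\<^sup>2))"

definition Lam :: "real \<Rightarrow> (nat \<Rightarrow> real measure) \<Rightarrow> real \<Rightarrow> nat \<Rightarrow> real \<Rightarrow> real" where
  "Lam \<alpha> D \<theta> K T = (THE x. x \<ge> 0 \<and> (\<Sum>i\<in>{1..K}. gfun \<alpha> D \<theta> i x) = T / Mconst \<alpha>)"

definition lam :: "real \<Rightarrow> (nat \<Rightarrow> real measure) \<Rightarrow> real \<Rightarrow> nat \<Rightarrow> real \<Rightarrow> nat \<Rightarrow> real" where
  "lam \<alpha> D \<theta> K T i = gfun \<alpha> D \<theta> i (Lam \<alpha> D \<theta> K T)"

text \<open>B = {i in [K] : ln(1/Delta_i) < Lambda} (gap 0 gives ln = +infinity, so excluded).\<close>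
definition Bset :: "real \<Rightarrow> (nat \<Rightarrow> real measure) \<Rightarrow> real \<Rightarrow> nat \<Rightarrow> real \<Rightarrow> nat set" where
  "Bset \<alpha> D \<theta> K T = {i \<in> {1..K}. gap D \<theta> i \<noteq> 0 \<and> ln (1 / gap D \<theta> i) < Lam \<alpha> D \<theta> K T}"

definition emp_gap :: "(nat \<Rightarrow> nat \<Rightarrow> 'w \<Rightarrow> real) \<Rightarrow> real \<Rightarrow> nat \<Rightarrow> nat \<Rightarrow> 'w \<Rightarrow> real" where
  "emp_gap X \<theta> i t \<omega> = \<bar>(\<Sum>s\<in>{1..t}. X i s \<omega>) / real t - \<theta>\<bar>"

definition Mevent :: "'w measure \<Rightarrow> (nat \<Rightarrow> nat \<Rightarrow> 'w \<Rightarrow> real) \<Rightarrow> real \<Rightarrow> (nat \<Rightarrow> real measure)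
    \<Rightarrow> real \<Rightarrow> nat \<Rightarrow> real \<Rightarrow> nat \<Rightarrow> real \<Rightarrow> 'w set" where
  "Mevent P X \<alpha> D \<theta> K T i \<kappa> =
     {\<omega> \<in> space P. \<forall>t::nat. 1 \<le> t \<and> real t \<le> lam \<alpha> D \<theta> K T i \<longrightarrow>
        \<bar>emp_gap X \<theta> i t \<omega> - gap D \<theta> i\<bar>
          \<le> sqrt ((lam \<alpha> D \<theta> K T i * (gap D \<theta> i)\<^sup>2 / 5 - \<kappa> / 2
                   + 1 / (4 * \<alpha>) * ln (lam \<alpha> D \<theta> K T i / real t)) / real t)}"

end

theory Submission imports Defs begin

lemma (in prob_space) max_hoeff_core:
  fixes Y :: "nat \<Rightarrow> 'a \<Rightarrow> real"
  assumes ind: "indep_vars (\<lambda>_. borel) Y UNIV"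
    and bnd: "\<And>s x. x \<in> space M \<Longrightarrow> Y s x \<in> {0..1}"
    and mean: "\<And>s. expectation (Y s) = \<mu>"
    and a: "a > 0" and n: "n > 0"
  shows "prob {x\<in>space M. \<exists>t\<in>{1..n}. a \<le> (\<Sum>s\<in>{1..t}. Y s x) - real t * \<mu>} \<le> exp (-2*a^2/n)"
proof -
  have rv[measurable]: "\<And>s. Y s \<in> borel_measurable M" using ind unfolding indep_vars_def by auto
  define l where "l = 4*a/n"
  have l: "l > 0" using a n by (simp add: l_def)
  define Z where "Z s x = Y s x - \<mu>" for s x
  define Sf where "Sf r f = (\<Sum>s\<in>{1..r}. f s - \<mu>)" for r and f :: "nat \<Rightarrow> real"
  define S where "S t x = (\<Sum>s\<in>{1..t}. Z s x)" for t x
  define R where "R t x = (\<Sum>s\<in>{t<..n}. Z s x)" for t x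
  define cnd where "cnd t x = (a \<le> S t x \<and> (\<forall>r\<in>{1..<t}. S r x < a))" for t x
  define ind where "ind t x = (if cnd t x then 1 else (0::real))" for t x
  define B where "B = 1 + \<bar>\<mu>\<bar>"
  have B: "B \<ge> 1" by (simp add: B_def)
  have Zm[measurable]: "Z s \<in> borel_measurable M" for s unfolding Z_def by measurable
  have Sm[measurable]: "S t \<in> borel_measurable M" for t unfolding S_def by measurable
  have Rm[measurable]: "R t \<in> borel_measurable M" for t unfolding R_def by measurable
  have indm[measurable]: "ind t \<in> borel_measurable M" for t
  proof -
    have [measurable]: "Measurable.pred M (\<lambda>x. \<forall>r\<in>{1..<t}. S r x < a)"
      by (intro pred_intros_finite) measurable
    show ?thesis unfolding ind_def cnd_def by measurable
  qed
  have Zb: "\<bar>Z s x\<bar> \<le> B" if "x \<in> space M" for s x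
    using bnd[OF that, of s] unfolding Z_def B_def by auto
  have Sb: "\<bar>S t x\<bar> \<le> t * B" if "x \<in> space M" for t x
  proof -
    have "\<bar>S t x\<bar> \<le> (\<Sum>s\<in>{1..t}. \<bar>Z s x\<bar>)" unfolding S_def by (rule sum_abs)
    also have "\<dots> \<le> (\<Sum>s\<in>{1..t}. B)" by (intro sum_mono Zb that)
    finally show ?thesis by simp
  qed
  have Rb: "\<bar>R t x\<bar> \<le> n * B" if "x \<in> space M" for t x
  proof -
    have "\<bar>R t x\<bar> \<le> (\<Sum>s\<in>{t<..n}. \<bar>Z s x\<bar>)" unfolding R_def by (rule sum_abs)
    also have "\<dots> \<le> (\<Sum>s\<in>{t<..n}. B)" by (intro sum_mono Zb that)
    also have "\<dots> \<le> n * B" using B by (simp add: mult_right_mono)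
    finally show ?thesis by simp
  qed
  have Sb': "S t x \<le> t * B" "R t x \<le> n * B" "Z t x \<le> B" if "x \<in> space M" for t x
    using Sb[OF that, of t] Rb[OF that, of t] Zb[OF that, of t] by (auto dest: abs_le_D1)
  have intb: "integrable M f" if "f \<in> borel_measurable M" "\<And>x. x \<in> space M \<Longrightarrow> \<bar>f x\<bar> \<le> C" for f and C :: real
    by (rule integrable_const_bound[where B=C]) (use that in auto)
  have indb: "ind t x \<in> {0,1}" for t x by (simp add: ind_def)
  have expS_int: "integrable M (\<lambda>x. exp (l * S t x))" for t
    by (rule intb[of _ "exp (l * (t*B))"]) (use Sb' l in \<open>auto intro: mult_left_mono\<close>)
  have expR_int: "integrable M (\<lambda>x. exp (l * R t x))" for t
    by (rule intb[of _ "exp (l * (n*B))"]) (use Sb' l in \<open>auto intro: mult_left_mono\<close>)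
  have expZ_int: "integrable M (\<lambda>x. exp (l * Z s x))" for s
    by (rule intb[of _ "exp (l * B)"]) (use Sb' l in \<open>auto intro: mult_left_mono\<close>)
  have Y_int: "integrable M (Y s)" for s
    by (rule intb[of _ 1]) (use bnd in auto)
  have ind_int: "integrable M (ind t)" for t
    by (rule intb[of _ 1]) (auto simp: ind_def)
  have indS_int: "integrable M (\<lambda>x. ind t x * exp (l * S u x))" for t u
    by (rule intb[of _ "exp (l * (u*B))"]) (measurable, use Sb' l in \<open>auto simp: ind_def intro: mult_left_mono\<close>)
  have EZ1: "expectation (\<lambda>x. exp (l * Z s x)) \<ge> 1" for s
  proof -
    have i1: "integrable M (\<lambda>x. 1 + l * Z s x)"
      by (rule intb[of _ "1 + l*B"]) (measurable, use l in \<open>auto intro!: order_trans[OF abs_triangle_ineq] add_mono mult_left_mono Zb simp: abs_mult\<close>)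
    have "expectation (\<lambda>x. 1 + l * Z s x) = 1"
      using Y_int[of s] mean[of s] by (simp add: Z_def prob_space algebra_simps)
    moreover have "expectation (\<lambda>x. 1 + l * Z s x) \<le> expectation (\<lambda>x. exp (l * Z s x))"
      by (intro integral_mono expZ_int) (use i1 in \<open>auto intro!: exp_ge_add_one_self\<close>)
    ultimately show ?thesis by simp
  qed
  have EZ2: "expectation (\<lambda>x. exp (l * Z s x)) \<le> exp (l^2/8)" for s
  proof -
    have ib: "interval_bounded_random_variable M (Y s) 0 1"
      unfolding interval_bounded_random_variable_def interval_bounded_random_variable_axioms_def
      using prob_space_axioms bnd by (auto intro!: AE_I2)
    have "(\<integral>\<^sup>+x. exp (l * (Y s x - expectation (Y s))) \<partial>M) \<le> ennreal (exp (l\<^sup>2 * (1 - 0)\<^sup>2 / 8))"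
      by (rule interval_bounded_random_variable.Hoeffdings_lemma_nn_integral[OF ib l])
    moreover have "(\<integral>\<^sup>+x. exp (l * (Y s x - expectation (Y s))) \<partial>M) = ennreal (expectation (\<lambda>x. exp (l * Z s x)))"
      using expZ_int[of s] by (subst nn_integral_eq_integral) (auto simp: Z_def mean)
    ultimately show ?thesis by (simp add: ennreal_le_iff)
  qed
  have indZ: "indep_vars (\<lambda>_. borel) (\<lambda>s x. exp (l * Z s x)) UNIV"
    using indep_vars_compose2[OF ind, of "\<lambda>i y. exp (l*(y-\<mu>))" "\<lambda>_. borel"] by (simp add: Z_def)
  have prodE: "expectation (\<lambda>x. \<Prod>s\<in>J. exp (l * Z s x)) = (\<Prod>s\<in>J. expectation (\<lambda>x. exp (l * Z s x)))"
    if "finite J" for J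
    by (rule indep_vars_lebesgue_integral[OF that indep_vars_subset[OF indZ]]) (auto intro: expZ_int)
  have expsum: "exp (l * (\<Sum>s\<in>J. Z s x)) = (\<Prod>s\<in>J. exp (l * Z s x))" if "finite J" for J x
    using that by (simp add: sum_distrib_left exp_sum)
  have ER: "expectation (\<lambda>x. exp (l * R t x)) \<ge> 1" for t
    unfolding R_def using prodE[of "{t<..n}"] expsum[of "{t<..n}"] EZ1 by (simp add: prod_ge_1)
  have ESn: "expectation (\<lambda>x. exp (l * S n x)) \<le> exp (n * l^2/8)"
  proof -
    have "expectation (\<lambda>x. exp (l * S n x)) = (\<Prod>s\<in>{1..n}. expectation (\<lambda>x. exp (l * Z s x)))"
      unfolding S_def using prodE[of "{1..n}"] expsum[of "{1..n}"] by simp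
    also have "\<dots> \<le> (\<Prod>s\<in>{1..n}. exp (l^2/8))"
      by (intro prod_mono) (use EZ1 EZ2 in \<open>auto intro: order_trans[OF zero_le_one]\<close>)
    also have "\<dots> = exp (n * l^2/8)" by (simp add: exp_of_nat_mult[symmetric])
    finally show ?thesis .
  qed

  have SR: "S n x = S t x + R t x" if "t \<le> n" for t x
  proof -
    have "{1..n} = {1..t} \<union> {t<..n}" using that by auto
    then show ?thesis unfolding S_def R_def by (simp add: sum.union_disjoint[symmetric] ivl_disj_int)
  qed
  have key: "exp (l*a) * expectation (ind t) \<le> expectation (\<lambda>x. ind t x * exp (l * S n x))"
    if t: "t \<in> {1..n}" for t
  proof -
    have iv: "indep_var borel (\<lambda>x. ind t x * exp (l * S t x)) borel (\<lambda>x. exp (l * R t x))"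
    proof -
      define F where "F f = (if a \<le> Sf t f \<and> (\<forall>r\<in>{1..<t}. Sf r f < a) then 1 else (0::real)) * exp (l * Sf t f)" for f
      define G where "G f = exp (l * (\<Sum>s\<in>{t<..n}. f s - \<mu>))" for f :: "nat \<Rightarrow> real"
      have Fm: "F \<in> borel_measurable (PiM {1..t} (\<lambda>_. borel))"
      proof -
        have [measurable]: "Measurable.pred (PiM {1..t} (\<lambda>_. borel)) (\<lambda>f. \<forall>r\<in>{1..<t}. Sf r f < a)"
          by (intro pred_intros_finite) (unfold Sf_def, measurable)
        show ?thesis unfolding F_def by (unfold Sf_def, measurable)
      qed
      have Gm: "G \<in> borel_measurable (PiM {t<..n} (\<lambda>_. borel))" unfolding G_def by measurable
      have "indep_var borel (F \<circ> (\<lambda>\<omega>. restrict (\<lambda>i. Y i \<omega>) {1..t})) borel (G \<circ> (\<lambda>\<omega>. restrict (\<lambda>i. Y i \<omega>) {t<..n}))"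
        by (rule indep_var_compose[OF indep_var_restrict[OF ind] Fm Gm]) auto
      moreover have "F \<circ> (\<lambda>\<omega>. restrict (\<lambda>i. Y i \<omega>) {1..t}) = (\<lambda>x. ind t x * exp (l * S t x))"
      proof
        fix x
        have e: "Sf r (restrict (\<lambda>i. Y i x) {1..t}) = S r x" if "r \<le> t" for r
          unfolding Sf_def S_def Z_def by (intro sum.cong) (use that in auto)
        show "(F \<circ> (\<lambda>\<omega>. restrict (\<lambda>i. Y i \<omega>) {1..t})) x = ind t x * exp (l * S t x)"
          using e by (auto simp: F_def ind_def cnd_def)
      qed
      moreover have "G \<circ> (\<lambda>\<omega>. restrict (\<lambda>i. Y i \<omega>) {t<..n}) = (\<lambda>x. exp (l * R t x))"
        unfolding G_def R_def Z_def by (auto intro!: sum.cong)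
      ultimately show ?thesis by simp
    qed
    have E0: "expectation (\<lambda>x. ind t x * exp (l * S t x)) \<ge> 0"
      by (intro integral_nonneg_AE AE_I2) (auto simp: ind_def)
    have "exp (l*a) * expectation (ind t) = expectation (\<lambda>x. exp (l*a) * ind t x)" by simp
    also have "\<dots> \<le> expectation (\<lambda>x. ind t x * exp (l * S t x))"
      by (intro integral_mono ind_int indS_int Bochner_Integration.integrable_mult_right)
         (use l in \<open>auto simp: ind_def cnd_def\<close>)
    also have "\<dots> \<le> expectation (\<lambda>x. ind t x * exp (l * S t x)) * expectation (\<lambda>x. exp (l * R t x))"
      using mult_left_mono[OF ER[of t] E0] by simp
    also have "\<dots> = expectation (\<lambda>x. (ind t x * exp (l * S t x)) * exp (l * R t x))"
      by (rule indep_var_lebesgue_integral[OF iv indS_int expR_int, symmetric])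
    also have "\<dots> = expectation (\<lambda>x. ind t x * exp (l * S n x))"
      using SR[of t] t by (simp add: exp_add mult.assoc distrib_left)
    finally show ?thesis .
  qed
  have sumind: "(\<Sum>t\<in>{1..n}. ind t x) \<le> 1" for x
  proof (cases "\<exists>t0\<in>{1..n}. cnd t0 x")
    case True
    then obtain t0 where t0: "t0 \<in> {1..n}" "cnd t0 x" by blast
    have z: "ind t x = 0" if "t \<in> {1..n} - {t0}" for t
    proof (rule ccontr)
      assume "ind t x \<noteq> 0"
      then have c: "cnd t x" by (simp add: ind_def split: if_splits)
      show False
      proof (cases "t < t0")
        case True then show False using c t0 that unfolding cnd_def by force
      next
        case False then have "t0 < t" using that by auto
        then show False using c t0 that unfolding cnd_def by force
      qed
    qed
    have "(\<Sum>t\<in>{1..n}. ind t x) = ind t0 x + (\<Sum>t\<in>{1..n} - {t0}. ind t x)"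
      using t0 by (simp add: sum.remove)
    also have "\<dots> = 1" using z t0 by (simp add: ind_def)
    finally show ?thesis by simp
  next
    case False
    then show ?thesis by (simp add: ind_def)
  qed
  define A where "A = {x\<in>space M. \<exists>t\<in>{1..n}. a \<le> (\<Sum>s\<in>{1..t}. Y s x) - real t * \<mu>}"
  have Am: "A \<in> sets M" unfolding A_def by measurable
  have SY: "S t x = (\<Sum>s\<in>{1..t}. Y s x) - real t * \<mu>" for t x
    unfolding S_def Z_def by (simp add: sum_subtractf)
  have cover: "indicator A x \<le> (\<Sum>t\<in>{1..n}. ind t x)" for x
  proof (cases "x \<in> A")
    case False
    then show ?thesis by (simp add: ind_def sum_nonneg)
  next
    case True
    define P where "P t = (t \<in> {1..n} \<and> a \<le> S t x)" for t
    have "\<exists>t. P t" using True unfolding A_def P_def SY by blast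
    define t0 where "t0 = (LEAST t. P t)"
    have P0: "P t0" unfolding t0_def by (rule LeastI_ex) fact
    have nP: "\<not> P r" if "r < t0" for r unfolding t0_def using not_less_Least that t0_def by blast
    have "cnd t0 x" unfolding cnd_def
    proof safe
      show "a \<le> S t0 x" using P0 by (simp add: P_def)
    next
      fix r assume "r \<in> {1..<t0}"
      then show "S r x < a" using nP[of r] P0 by (auto simp: P_def)
    qed
    then have "ind t0 x \<le> (\<Sum>t\<in>{1..n}. ind t x)"
      using P0 by (intro member_le_sum) (auto simp: P_def ind_def)
    then show ?thesis using True \<open>cnd t0 x\<close> by (simp add: ind_def)
  qed
  have Aint: "integrable M (indicator A :: 'a \<Rightarrow> real)"
    using Am by (intro integrable_real_indicator) (auto simp: emeasure_eq_measure)
  have "exp (l*a) * prob A = exp (l*a) * expectation (indicator A)"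
    using Am by simp
  also have "\<dots> \<le> exp (l*a) * expectation (\<lambda>x. \<Sum>t\<in>{1..n}. ind t x)"
    by (intro mult_left_mono integral_mono cover) (auto intro: ind_int Aint)
  also have "\<dots> = (\<Sum>t\<in>{1..n}. exp (l*a) * expectation (ind t))"
    by (simp add: Bochner_Integration.integral_sum ind_int sum_distrib_left)
  also have "\<dots> \<le> (\<Sum>t\<in>{1..n}. expectation (\<lambda>x. ind t x * exp (l * S n x)))"
    by (intro sum_mono key)
  also have "\<dots> = expectation (\<lambda>x. (\<Sum>t\<in>{1..n}. ind t x) * exp (l * S n x))"
    unfolding sum_distrib_right by (rule Bochner_Integration.integral_sum[symmetric]) (rule indS_int)
  also have "\<dots> \<le> expectation (\<lambda>x. exp (l * S n x))"
  proof (intro integral_mono expS_int)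
    show "integrable M (\<lambda>x. (\<Sum>t\<in>{1..n}. ind t x) * exp (l * S n x))"
      unfolding sum_distrib_right by (intro Bochner_Integration.integrable_sum indS_int)
    show "(\<Sum>t\<in>{1..n}. ind t x) * exp (l * S n x) \<le> exp (l * S n x)" for x
      using mult_right_mono[OF sumind[of x], of "exp (l * S n x)"] by simp
  qed
  also have "\<dots> \<le> exp (n * l^2/8)" by (rule ESn)
  finally have "prob A \<le> exp (n * l^2/8) / exp (l*a)"
    by (simp add: field_simps)
  also have "\<dots> = exp (-2*a^2/n)"
    using n by (simp add: exp_diff[symmetric] l_def field_simps power2_eq_square)
  finally show ?thesis unfolding A_def .
qed

lemma (in prob_space) max_hoeff_abs:
  fixes Y :: "nat \<Rightarrow> 'a \<Rightarrow> real"
  assumes ind: "indep_vars (\<lambda>_. borel) Y UNIV"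
    and bnd: "\<And>s. AE x in M. Y s x \<in> {0..1}"
    and mean: "\<And>s. expectation (Y s) = \<mu>"
    and a: "a \<ge> 0" and n: "n > 0"
  shows "prob {x\<in>space M. \<exists>t\<in>{1..n}. a \<le> \<bar>(\<Sum>s\<in>{1..t}. Y s x) - real t * \<mu>\<bar>} \<le> 2 * exp (-2*a^2/n)"
proof (cases "a = 0")
  case True
  have "prob {x\<in>space M. \<exists>t\<in>{1..n}. a \<le> \<bar>(\<Sum>s\<in>{1..t}. Y s x) - real t * \<mu>\<bar>} \<le> 1" by (rule prob_le_1)
  moreover have "2 * exp (-2*a^2/n) = 2" using True by simp
  ultimately show ?thesis by linarith
next
  case False
  then have a: "a > 0" using a by simp
  have rv[measurable]: "\<And>s. Y s \<in> borel_measurable M" using ind unfolding indep_vars_def by auto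
  define Y' where "Y' s x = max 0 (min 1 (Y s x))" for s x
  define W where "W s x = 1 - Y' s x" for s x
  have Y'm[measurable]: "Y' s \<in> borel_measurable M" for s unfolding Y'_def by measurable
  have indY': "indep_vars (\<lambda>_. borel) Y' UNIV"
    using indep_vars_compose2[OF ind, of "\<lambda>i y. max 0 (min 1 y)" "\<lambda>_. borel"] by (simp add: Y'_def[abs_def])
  have indW: "indep_vars (\<lambda>_. borel) W UNIV"
    using indep_vars_compose2[OF ind, of "\<lambda>i y. 1 - max 0 (min 1 y)" "\<lambda>_. borel"] by (simp add: W_def[abs_def] Y'_def[abs_def])
  have AEeq: "AE x in M. Y' s x = Y s x" for s
    using bnd[of s] by eventually_elim (auto simp: Y'_def)
  have meanY': "expectation (Y' s) = \<mu>" for s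
    using integral_cong_AE[OF Y'm rv AEeq[of s]] mean[of s] by simp
  have Y'int: "integrable M (Y' s)" for s
    by (rule integrable_const_bound[where B=1]) (auto simp: Y'_def)
  have meanW: "expectation (W s) = 1 - \<mu>" for s
    using Y'int[of s] meanY'[of s] by (simp add: W_def[abs_def] prob_space)
  define U where "U = {x\<in>space M. \<exists>t\<in>{1..n}. a \<le> (\<Sum>s\<in>{1..t}. Y' s x) - real t * \<mu>}"
  define L where "L = {x\<in>space M. \<exists>t\<in>{1..n}. a \<le> (\<Sum>s\<in>{1..t}. W s x) - real t * (1 - \<mu>)}"
  have U: "prob U \<le> exp (-2*a^2/n)" unfolding U_def
    by (rule max_hoeff_core[OF indY' _ meanY' a n]) (auto simp: Y'_def)
  have L: "prob L \<le> exp (-2*a^2/n)" unfolding L_def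
    by (rule max_hoeff_core[OF indW _ meanW a n]) (auto simp: W_def Y'_def)
  have Um: "U \<in> sets M" unfolding U_def by measurable
  have Lm: "L \<in> sets M" unfolding L_def W_def by measurable
  have AEall: "AE x in M. \<forall>s\<in>{1..n}. Y' s x = Y s x"
    by (intro AE_finite_allI AEeq) simp
  have "prob {x\<in>space M. \<exists>t\<in>{1..n}. a \<le> \<bar>(\<Sum>s\<in>{1..t}. Y s x) - real t * \<mu>\<bar>} \<le> prob (U \<union> L)"
  proof (rule finite_measure_mono_AE)
    show "U \<union> L \<in> sets M" using Um Lm by auto
    show "AE x in M. x \<in> {x\<in>space M. \<exists>t\<in>{1..n}. a \<le> \<bar>(\<Sum>s\<in>{1..t}. Y s x) - real t * \<mu>\<bar>} \<longrightarrow> x \<in> U \<union> L"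
      using AEall
    proof eventually_elim
      case (elim x)
      show ?case
      proof
        assume "x \<in> {x\<in>space M. \<exists>t\<in>{1..n}. a \<le> \<bar>(\<Sum>s\<in>{1..t}. Y s x) - real t * \<mu>\<bar>}"
        then obtain t where t: "t \<in> {1..n}" "x \<in> space M" "a \<le> \<bar>(\<Sum>s\<in>{1..t}. Y s x) - real t * \<mu>\<bar>" by auto
        have e: "(\<Sum>s\<in>{1..t}. Y s x) = (\<Sum>s\<in>{1..t}. Y' s x)"
          using elim t(1) by (intro sum.cong) auto
        have e2: "(\<Sum>s\<in>{1..t}. W s x) - real t * (1 - \<mu>) = - ((\<Sum>s\<in>{1..t}. Y' s x) - real t * \<mu>)"
          unfolding W_def by (simp add: sum_subtractf algebra_simps)
        show "x \<in> U \<union> L"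
        proof (cases "(\<Sum>s\<in>{1..t}. Y' s x) - real t * \<mu> \<ge> 0")
          case True then have "x \<in> U" using t e unfolding U_def by auto
          then show ?thesis by simp
        next
          case False then have "x \<in> L" using t e e2 unfolding L_def by (auto intro!: bexI[of _ t])
          then show ?thesis by simp
        qed
      qed
    qed
  qed
  also have "\<dots> \<le> prob U + prob L" by (rule measure_Un_le[OF Um Lm])
  finally show ?thesis using U L by simp
qed


theorem lemma9:
  fixes P :: "'w measure"
    and X :: "nat \<Rightarrow> nat \<Rightarrow> 'w \<Rightarrow> real"
    and D :: "nat \<Rightarrow> real measure"
    and \<theta> \<alpha> T \<kappa> :: real
    and K i :: nat
  assumes "prob_space P"
    and "\<And>j s. j \<in> {1..K} \<Longrightarrow> X j s \<in> borel_measurable P"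
    and "\<And>j. j \<in> {1..K} \<Longrightarrow> prob_space.indep_vars P (\<lambda>_. borel) (X j) UNIV"
    and "\<And>j s. j \<in> {1..K} \<Longrightarrow> distr P borel (X j s) = D j"
    and "\<And>j. j \<in> {1..K} \<Longrightarrow> measure (D j) {0..1} = 1"
    and "0 < \<theta>" and "\<theta> < 1"
    and "0 < \<alpha>" and "\<alpha> \<le> 8"
    and "T \<ge> max (40 / \<alpha> + 1) 40 * real K"
    and "i \<in> Bset \<alpha> D \<theta> K T"
  shows "measure P (Mevent P X \<alpha> D \<theta> K T i \<kappa>)
           \<ge> 1 - 4 * 2 powr (1 / (8 * \<alpha>)) / (2 powr (1 / (8 * \<alpha>)) - 1)
                 * exp (- lam \<alpha> D \<theta> K T i * (gap D \<theta> i)\<^sup>2 / 10 + \<kappa> / 4)"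
proof -
  interpret prob_space P by fact
  have iK: "i \<in> {1..K}" using assms(11) unfolding Bset_def by auto
  have Xm[measurable]: "X i s \<in> borel_measurable P" for s using assms(2)[OF iK] .
  have indX: "indep_vars (\<lambda>_. borel) (X i) UNIV" using assms(3)[OF iK] .
  define th where "th = arm_mean D i"
  have meanX: "expectation (X i s) = th" for s
  proof -
    have "th = integral\<^sup>L (distr P borel (X i s)) (\<lambda>x. x)"
      unfolding th_def arm_mean_def using assms(4)[OF iK, of s] by simp
    also have "\<dots> = expectation (X i s)" using integral_distr[OF Xm[of s], of "\<lambda>x. x"] by simp
    finally show ?thesis by simp
  qed
  have bndX: "AE x in P. X i s x \<in> {0..1}" for s
  proof -
    have "prob (X i s -` {0..1} \<inter> space P) = measure (distr P borel (X i s)) {0..1}"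
      by (subst measure_distr) auto
    also have "\<dots> = 1" using assms(4)[OF iK, of s] assms(5)[OF iK] by simp
    finally have "AE x in P. x \<in> X i s -` {0..1} \<inter> space P" by (rule AE_prob_1)
    then show ?thesis by eventually_elim auto
  qed
  define lm where "lm = lam \<alpha> D \<theta> K T i"
  define \<Delta> where "\<Delta> = gap D \<theta> i"
  define c where "c = 1 / (4 * \<alpha>)"
  define A0 where "A0 = lm * \<Delta>\<^sup>2 / 5 - \<kappa> / 2"
  define q where "q = 2 powr (1 / (8 * \<alpha>))"
  define u where "u = exp (- lm * \<Delta>\<^sup>2 / 10 + \<kappa> / 4)"
  define Cst where "Cst = 4 * q / (q - 1)"
  have c: "c > 0" using assms(8) by (simp add: c_def)
  define g where "g = c * ln 2 / 2"
  have g: "g > 0" using c by (simp add: g_def)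
  have qg: "q = exp g" unfolding q_def g_def c_def powr_def by (simp add: field_simps)
  have q1: "q > 1" using g qg by simp
  have u: "u = exp (- A0 / 2)" unfolding u_def A0_def by (simp add: field_simps)
  have Cst4: "Cst > 4" using q1 by (simp add: Cst_def field_simps)
  have Mm: "Mevent P X \<alpha> D \<theta> K T i \<kappa> \<in> sets P"
  proof -
    have "Measurable.pred P (\<lambda>\<omega>. \<forall>t::nat. 1 \<le> t \<and> real t \<le> lm \<longrightarrow>
        \<bar>emp_gap X \<theta> i t \<omega> - \<Delta>\<bar> \<le> sqrt ((lm * \<Delta>\<^sup>2 / 5 - \<kappa> / 2 + 1 / (4 * \<alpha>) * ln (lm / real t)) / real t))"
    proof (intro pred_intros_countable pred_intros_logic)
      fix t :: nat
      show "Measurable.pred P (\<lambda>\<omega>. \<bar>emp_gap X \<theta> i t \<omega> - \<Delta>\<bar> \<le> sqrt ((lm * \<Delta>\<^sup>2 / 5 - \<kappa> / 2 + 1 / (4 * \<alpha>) * ln (lm / real t)) / real t))"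
        unfolding emp_gap_def by measurable
    qed auto
    then show ?thesis unfolding Mevent_def lm_def \<Delta>_def by measurable
  qed
  have eqC: "4 * 2 powr (1 / (8 * \<alpha>)) / (2 powr (1 / (8 * \<alpha>)) - 1)
                 * exp (- lam \<alpha> D \<theta> K T i * (gap D \<theta> i)\<^sup>2 / 10 + \<kappa> / 4) = Cst * u"
    by (simp add: Cst_def q_def u_def lm_def \<Delta>_def)
  have "measure P (Mevent P X \<alpha> D \<theta> K T i \<kappa>) \<ge> 1 - Cst * u"
  proof (cases "Cst * u \<ge> 1")
    case True
    then show ?thesis using measure_nonneg[of P "Mevent P X \<alpha> D \<theta> K T i \<kappa>"] by linarith
  next
    case False
    have "4 * u \<le> Cst * u" using Cst4 by (intro mult_right_mono) (auto simp: u_def)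
    then have "u < 1" using False by linarith
    then have A0: "A0 > 0" unfolding u by simp
    define r where "r = exp (- c * ln 2)"
    have r: "0 < r" "r < 1" using c by (auto simp: r_def)
    have rq: "r = 1 / q^2" unfolding r_def qg g_def
      by (simp add: exp_minus power2_eq_square exp_add[symmetric] field_simps)
    define N where "N = nat \<lceil>lm\<rceil> + 1"
    define nk where "nk k = nat \<lfloor>lm / 2^k\<rfloor>" for k :: nat
    define ak where "ak k = sqrt (lm / 2^(k+1) * (A0 + c * k * ln 2))" for k :: nat
    define Bad where "Bad k = {x\<in>space P. \<exists>t\<in>{1..nk k}. ak k \<le> \<bar>(\<Sum>s\<in>{1..t}. X i s x) - real t * th\<bar>}" for k
    have Badm: "Bad k \<in> sets P" for k unfolding Bad_def by measurable
    have Badp: "prob (Bad k) \<le> 2 * exp (-A0) * r^k" for k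
    proof (cases "nk k = 0")
      case True
      then have "Bad k = {}" unfolding Bad_def by auto
      then show ?thesis using r by simp
    next
      case False
      then have nk1: "1 \<le> real (nk k)" by simp
      have nkle: "real (nk k) \<le> lm / 2^k" unfolding nk_def using False
        by (metis floor_less_zero linorder_not_less nat_eq_iff2 nk_def of_nat_nat of_int_floor_le)
      have lm: "lm > 0" using nk1 nkle by (smt (verit, best) divide_nonpos_pos zero_less_power)
      define E where "E = A0 + c * k * ln 2"
      have E: "E \<ge> 0" unfolding E_def using A0 c by simp
      have ak2: "(ak k)^2 = lm / 2^(k+1) * E" unfolding ak_def E_def using lm E E_def by simp
      have akn: "ak k \<ge> 0" unfolding ak_def using lm E E_def by simp
      have "prob (Bad k) \<le> 2 * exp (-2 * (ak k)^2 / nk k)" unfolding Bad_def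
        by (rule max_hoeff_abs[OF indX bndX meanX akn]) (use False in simp)
      also have "-2 * (ak k)^2 / nk k \<le> - E"
      proof -
        have "2 * (ak k)^2 = (lm / 2^k) * E" unfolding ak2 by (simp add: field_simps)
        also have "\<dots> \<ge> nk k * E" using nkle E by (intro mult_right_mono) auto
        finally have "2 * (ak k)^2 \<ge> nk k * E" .
        then show ?thesis using nk1 by (simp add: field_simps)
      qed
      then have "2 * exp (-2 * (ak k)^2 / nk k) \<le> 2 * exp (-E)" by simp
      also have "exp (-E) = exp (-A0) * r^k" unfolding E_def r_def
        by (simp add: exp_diff exp_minus exp_of_nat_mult[symmetric] field_simps)
      finally show ?thesis by simp
    qed
    have cover: "space P - Mevent P X \<alpha> D \<theta> K T i \<kappa> \<subseteq> (\<Union>k\<in>{..<N}. Bad k)"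
    proof
      fix x assume x: "x \<in> space P - Mevent P X \<alpha> D \<theta> K T i \<kappa>"
      then obtain t :: nat where t1: "1 \<le> t" and tl: "real t \<le> lm"
        and bad: "\<not> \<bar>emp_gap X \<theta> i t x - \<Delta>\<bar> \<le> sqrt ((A0 + c * ln (lm / real t)) / real t)"
        unfolding Mevent_def lm_def \<Delta>_def A0_def c_def by auto
      have lm1: "lm \<ge> 1" using t1 tl by linarith
      define y where "y = lm / real t"
      have y1: "y \<ge> 1" using tl t1 by (simp add: y_def)
      define v where "v = A0 + c * ln y"
      have v: "v \<ge> A0" using y1 c by (simp add: v_def)
      define m where "m = (\<Sum>s\<in>{1..t}. X i s x) / real t"
      have "sqrt (v / t) < \<bar>emp_gap X \<theta> i t x - \<Delta>\<bar>" using bad by (simp add: v_def y_def)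
      also have "\<dots> \<le> \<bar>m - th\<bar>"
        unfolding emp_gap_def \<Delta>_def gap_def m_def th_def by linarith
      finally have lt: "sqrt (v / t) < \<bar>m - th\<bar>" .
      have tpos: "real t > 0" using t1 by simp
      have "sqrt (t * v) = t * sqrt (v / t)"
      proof -
        have "real t * sqrt (v / t) = sqrt ((real t)^2) * sqrt (v / t)" by simp
        also have "\<dots> = sqrt ((real t)^2 * (v / t))" by (simp only: real_sqrt_mult)
        also have "\<dots> = sqrt (t * v)" using tpos by (simp add: power2_eq_square)
        finally show ?thesis by simp
      qed
      also have "\<dots> < t * \<bar>m - th\<bar>" using lt tpos by simp
      also have "\<dots> = \<bar>(\<Sum>s\<in>{1..t}. X i s x) - real t * th\<bar>"
        unfolding m_def using tpos by (simp add: abs_mult[symmetric] field_simps)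
      finally have main: "sqrt (t * v) < \<bar>(\<Sum>s\<in>{1..t}. X i s x) - real t * th\<bar>" .
      define k where "k = nat \<lfloor>log 2 y\<rfloor>"
      have lg: "log 2 y \<ge> 0" using y1 by simp
      have rk: "real k = \<lfloor>log 2 y\<rfloor>" using lg by (simp add: k_def)
      have k1: "2^k \<le> y"
      proof -
        have "(2::real)^k = 2 powr real k" by (simp add: powr_realpow)
        also have "\<dots> \<le> 2 powr log 2 y" using rk by (intro powr_mono) auto
        also have "\<dots> = y" using y1 by simp
        finally show ?thesis .
      qed
      have k2: "y < 2^(k+1)"
      proof -
        have "y = 2 powr log 2 y" using y1 by simp
        also have "\<dots> < 2 powr real (k+1)" using rk by (intro powr_less_mono) linarith+
        also have "\<dots> = 2^(k+1)" by (rule powr_realpow) simp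
        finally show ?thesis .
      qed
      have tk: "real t \<le> lm / 2^k" using k1 tpos by (simp add: y_def field_simps)
      have tnk: "t \<le> nk k" unfolding nk_def using tk
        by (metis le_nat_floor of_nat_le_iff floor_of_nat nat_int le_floor_iff)
      have tk2: "lm / 2^(k+1) < real t" using k2 tpos by (simp add: y_def field_simps)
      have lnk: "k * ln 2 \<le> ln y"
      proof -
        have "ln ((2::real)^k) \<le> ln y" using k1 y1 by simp
        then show ?thesis by (simp add: ln_realpow)
      qed
      have "(ak k)^2 \<le> t * v"
      proof -
        have "(ak k)^2 = lm / 2^(k+1) * (A0 + c * k * ln 2)"
          unfolding ak_def using A0 c lm1 by simp
        also have "\<dots> \<le> t * v"
        proof (rule mult_mono)
          show "lm / 2 ^ (k + 1) \<le> real t" using tk2 by simp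
          show "A0 + c * real k * ln 2 \<le> v" unfolding v_def using lnk c
            by (simp add: mult.assoc mult_left_mono)
        qed (use A0 c in auto)
        finally show ?thesis .
      qed
      then have "ak k \<le> sqrt (t * v)" unfolding ak_def
        using A0 c lm1 by (simp add: real_le_rsqrt)
      then have "x \<in> Bad k" unfolding Bad_def using x t1 tnk main by force
      moreover have "k < N"
      proof -
        have "real k < 2^k" by (rule of_nat_less_two_power)
        also have "\<dots> \<le> lm"
        proof -
          have "lm * 1 \<le> lm * t" using t1 lm1 by (intro mult_left_mono) auto
          then have "y \<le> lm" unfolding y_def using tpos by (simp add: divide_le_eq)
          then show ?thesis using k1 by linarith
        qed
        finally show ?thesis unfolding N_def by linarith
      qed
      ultimately show "x \<in> (\<Union>k\<in>{..<N}. Bad k)" by blast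
    qed
    have "prob (space P - Mevent P X \<alpha> D \<theta> K T i \<kappa>) \<le> prob (\<Union>k\<in>{..<N}. Bad k)"
      using cover Badm by (intro finite_measure_mono) auto
    also have "\<dots> \<le> (\<Sum>k<N. prob (Bad k))"
      using Badm by (intro finite_measure_subadditive_finite) auto
    also have "\<dots> \<le> (\<Sum>k<N. 2 * exp (-A0) * r^k)" by (intro sum_mono Badp)
    also have "\<dots> = 2 * exp (-A0) * (\<Sum>k<N. r^k)" by (simp add: sum_distrib_left)
    also have "(\<Sum>k<N. r^k) \<le> 1 / (1 - r)"
      using r by (simp add: sum_gp_strict field_simps)
    also have "2 * exp (-A0) * (1 / (1 - r)) \<le> Cst * u"
    proof -
      have "exp (-A0) \<le> u" unfolding u using A0 by simp
      moreover have "2 / (1 - r) \<le> Cst"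
      proof -
        have "2 / (1 - r) = 2 * q^2 / (q^2 - 1)" using q1 unfolding rq
          by (simp add: field_simps)
        also have "\<dots> = 2 * q^2 / ((q - 1) * (q + 1))" by (simp add: power2_eq_square algebra_simps)
        also have "\<dots> \<le> Cst"
        proof -
          have d: "(q - 1) * (q + 1) > 0" using q1 by simp
          have cq: "Cst * ((q - 1) * (q + 1)) = 4 * q * (q + 1)" unfolding Cst_def using q1
            by (simp add: field_simps)
          have qq: "0 \<le> q * q" "0 \<le> q" using q1 by auto
          have "2 * q^2 \<le> 4 * q * (q + 1)" using qq by (simp add: power2_eq_square algebra_simps)
          then have "2 * q^2 \<le> Cst * ((q - 1) * (q + 1))" by (simp only: cq)
          then show ?thesis using d by (simp add: divide_le_eq)
        qed
        finally show ?thesis .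
      qed
      ultimately have "(2 / (1 - r)) * exp (-A0) \<le> Cst * u"
        using r Cst4 by (intro mult_mono) (auto simp: u_def)
      then show ?thesis by simp
    qed
    finally have "prob (space P - Mevent P X \<alpha> D \<theta> K T i \<kappa>) \<le> Cst * u"
      using r by (simp add: mult_left_mono)
    then show ?thesis using prob_compl[OF Mm] by simp
  qed
  then show ?thesis using eqC by simp
qed

end
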